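(* Let $N\ge2$, $d\ge1$, and let $x(t)=(x_1(t),\dots,x_N(t))$ be a (Carathéodory) solution of $$\dot x_i(t)=\frac{\lambda_i(x)}{N}\sum_{j=1}^N M_{ij}(t)\,\phi_{ij}(x_i,x_j)\,(x_j(t)-x_i(t)),\qquad i=1,\dots,N,$$ where $x_i\in\mathbb{R}^d$, all $M_{ij}:[0,+\infty)\to[0,1]$ are Lebesgue measurable, and $\lambda_i:\mathbb{R}^{Nd}\to\mathbb{R}^+$, $\phi_{ij}:\mathbb{R}^d\times\mathbb{R}^d\to\mathbb{R}^+$ are Lipschitz continuous and strictly positive. Define $\mathrm{supp}(x(t))$ as the closed convex hull of $\{x_1(t),\dots,x_N(t)\}$. Then for $0\le t\le s$ it holds $\mathrm{supp}(x(t))\supseteq\mathrm{supp}(x(s))$. In particular, when $d=1$, the function $t\mapsto\max_j x_j(t)$ is non-increasing and $t\mapsto\min_j x_j(t)$ is non-decreasing; and in any dimension the diameter $t\mapsto\max_{i,j}|x_i(t)-x_j(t)|$ is non-increasing.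
   Context: $|\cdot|$ is the Euclidean norm. *)

theory Defs
  imports "HOL-Analysis.Analysis"
begin

text \<open>Agents are indexed by a finite type 'n (N = CARD('n)); positions live in
  real^'d (d = CARD('d)); a configuration is a point of real^'d^'n = R^(Nd).\<close>

definition consensus_field ::
  "('n::finite \<Rightarrow> real^'d^'n \<Rightarrow> real) \<Rightarrow> ('n \<Rightarrow> 'n \<Rightarrow> real \<Rightarrow> real)
   \<Rightarrow> ('n \<Rightarrow> 'n \<Rightarrow> real^'d::finite \<Rightarrow> real^'d \<Rightarrow> real)
   \<Rightarrow> real \<Rightarrow> real^'d^'n \<Rightarrow> real^'d^'n" where
  "consensus_field lam M phi t y =
     (\<chi> i. (lam i y / real CARD('n)) *\<^sub>R
        (\<Sum>j\<in>UNIV. (M i j t * phi i j (y $ i) (y $ j)) *\<^sub>R (y $ j - y $ i)))"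

text \<open>Caratheodory solution on [0,+\<infinity>): the right-hand side along the solution is
  Lebesgue integrable on every [0,t] and x satisfies the integral equation
  (equivalently, x is absolutely continuous and solves the ODE a.e.).\<close>

definition caratheodory_solution ::
  "(real \<Rightarrow> 'a::euclidean_space \<Rightarrow> 'a) \<Rightarrow> (real \<Rightarrow> 'a) \<Rightarrow> bool" where
  "caratheodory_solution F x \<longleftrightarrow>
     (\<forall>t\<ge>0. (\<lambda>s. F s (x s)) absolutely_integrable_on {0..t} \<and>
            x t = x 0 + integral {0..t} (\<lambda>s. F s (x s)))"

definition supp :: "real^'d^'n::finite \<Rightarrow> (real^'d) set" where
  "supp y = closure (convex hull (range (\<lambda>i. y $ i)))"

end

theory Submission
  imports Defs
begin

lemma eps_aux: fixes D L :: real assumes "D > 0" "L \<ge> 0" shows "D / (2 * (L + 1)) * L < D"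
proof -
  have "D * L < D * (2 * (L + 1))" using assms by (intro mult_strict_left_mono) auto
  then show ?thesis using assms by (simp add: field_simps)
qed

lemma real_induct_closed:
  fixes a b :: real
  assumes ab: "a \<le> b" and cl: "closed C" and aC: "a \<in> C"
    and step: "\<And>\<tau>. \<tau> \<in> C \<Longrightarrow> a \<le> \<tau> \<Longrightarrow> \<tau> < b \<Longrightarrow>
        eventually (\<lambda>\<sigma>. \<sigma> \<le> b \<longrightarrow> \<sigma> \<in> C) (at_right \<tau>)"
  shows "b \<in> C"
proof (rule ccontr)
  assume bC: "b \<notin> C"
  define D where "D = {a..b} - C"
  have bD: "b \<in> D" using ab bC by (simp add: D_def)
  have Dne: "D \<noteq> {}" using bD by auto
  have Dbdd: "bdd_below D" unfolding D_def by (rule bdd_belowI[of _ a]) auto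
  define \<tau> where "\<tau> = Inf D"
  have a\<tau>: "a \<le> \<tau>" unfolding \<tau>_def using Dne by (intro cInf_greatest) (auto simp: D_def)
  have \<tau>b: "\<tau> \<le> b" unfolding \<tau>_def using bD Dbdd by (intro cInf_lower)
  have sub: "{a..<\<tau>} \<subseteq> C"
  proof
    fix s assume s: "s \<in> {a..<\<tau>}"
    have "s \<notin> D"
    proof
      assume "s \<in> D"
      then have "\<tau> \<le> s" unfolding \<tau>_def using Dbdd by (intro cInf_lower)
      with s show False by auto
    qed
    with s \<tau>b show "s \<in> C" by (auto simp: D_def)
  qed
  have \<tau>C: "\<tau> \<in> C"
  proof (cases "a = \<tau>")
    case True then show ?thesis using aC by simp
  next
    case False
    then have "a < \<tau>" using a\<tau> by simp
    then have "closure {a..<\<tau>} = {a..\<tau>}" by simp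
    moreover have "closure {a..<\<tau>} \<subseteq> C" using sub cl by (simp add: closure_minimal)
    ultimately show ?thesis using a\<tau> by auto
  qed
  have \<tau>lb: "\<tau> < b" using \<tau>C bC \<tau>b by (cases "\<tau> = b") auto
  from step[OF \<tau>C a\<tau> \<tau>lb] obtain e where e: "e > \<tau>" "\<And>y. y > \<tau> \<Longrightarrow> y < e \<Longrightarrow> y \<le> b \<longrightarrow> y \<in> C"
    unfolding eventually_at_right_field by blast
  have "e \<le> Inf D" unfolding \<tau>_def
  proof (rule cInf_greatest[OF Dne])
    fix d assume d: "d \<in> D"
    have "\<tau> \<le> d" unfolding \<tau>_def using Dbdd d by (intro cInf_lower)
    moreover have "d \<noteq> \<tau>" using d \<tau>C by (auto simp: D_def)
    moreover have "d \<le> b" "d \<notin> C" using d by (auto simp: D_def)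
    ultimately show "e \<le> d" using e(2)[of d] by force
  qed
  then show False using e(1) \<tau>_def by simp
qed

lemma to_right:
  fixes \<tau> b :: real
  assumes "eventually P (at \<tau> within {0..b})" "0 \<le> \<tau>"
  shows "eventually (\<lambda>\<sigma>. \<sigma> \<le> b \<longrightarrow> P \<sigma>) (at_right \<tau>)"
  using assms unfolding eventually_at_filter
  by (elim eventually_mono) auto

lemma core:
  fixes x :: "real \<Rightarrow> real^'d::finite^'n::finite"
    and lam :: "'n \<Rightarrow> real^'d^'n \<Rightarrow> real"
    and M :: "'n \<Rightarrow> 'n \<Rightarrow> real \<Rightarrow> real"
    and phi :: "'n \<Rightarrow> 'n \<Rightarrow> real^'d \<Rightarrow> real^'d \<Rightarrow> real"
  assumes M_range: "\<And>i j t. t \<ge> 0 \<Longrightarrow> M i j t \<in> {0..1}"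
    and lam_cont: "\<And>i. continuous_on UNIV (lam i)"
    and lam_pos: "\<And>i y. lam i y > 0"
    and phi_cont: "\<And>i j. continuous_on UNIV (\<lambda>(a, b). phi i j a b)"
    and phi_pos: "\<And>i j a b. phi i j a b > 0"
    and sol: "caratheodory_solution (consensus_field lam M phi) x"
    and ab: "0 \<le> a" "a \<le> b"
  shows "v \<bullet> (x b $ i) \<le> Max (range (\<lambda>j. v \<bullet> (x a $ j)))"
proof -
  define F where "F s = consensus_field lam M phi s (x s)" for s
  define g where "g j s = v \<bullet> (x s $ j)" for j s
  define N where "N = real CARD('n)"
  have N0: "N > 0" unfolding N_def by simp
  define w where "w i j s = lam i (x s) / N * phi i j (x s $ i) (x s $ j) * (g j s - g i s)" for i j s
  have int: "F integrable_on {0..t}" if "0 \<le> t" for t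
    using sol that unfolding caratheodory_solution_def F_def absolutely_integrable_on_def by blast
  have xeq: "x t = x 0 + integral {0..t} F" if "0 \<le> t" for t
    using sol that unfolding caratheodory_solution_def F_def by blast
  have xcont: "continuous_on {0..b} x"
  proof -
    have "continuous_on {0..b} (\<lambda>t. x 0 + integral {0..t} F)"
      by (intro continuous_on_add continuous_on_const indefinite_integral_continuous_1 int) (use ab in auto)
    then show ?thesis by (rule continuous_on_eq) (simp add: xeq[symmetric])
  qed
  have gcont: "continuous_on {0..b} (g j)" for j
    unfolding g_def by (intro continuous_intros xcont)
  have diff: "g j \<sigma> - g j \<tau> = integral {\<tau>..\<sigma>} (\<lambda>s. v \<bullet> (F s $ j))"
    and dint: "(\<lambda>s. v \<bullet> (F s $ j)) integrable_on {\<tau>..\<sigma>}"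
    if "0 \<le> \<tau>" "\<tau> \<le> \<sigma>" for j \<tau> \<sigma>
  proof -
    have bl: "bounded_linear (\<lambda>y::real^'d^'n. v \<bullet> (y $ j))"
      by (intro bounded_linear_compose[OF bounded_linear_inner_right bounded_linear_vec_nth])
    have Fi: "F integrable_on {\<tau>..\<sigma>}"
      by (rule integrable_on_subinterval[OF int[of \<sigma>]]) (use that in auto)
    have "x \<sigma> - x \<tau> = integral {\<tau>..\<sigma>} F"
      using Henstock_Kurzweil_Integration.integral_combine[where a=0 and c=\<tau> and b=\<sigma> and f=F] int[of \<sigma>] that xeq[of \<sigma>] xeq[of \<tau>] by (simp add: algebra_simps flip: add_diff_eq)
    then have "g j \<sigma> - g j \<tau> = v \<bullet> (integral {\<tau>..\<sigma>} F $ j)"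
      unfolding g_def by (metis inner_diff_right vector_minus_component)
    also have "\<dots> = integral {\<tau>..\<sigma>} (\<lambda>s. v \<bullet> (F s $ j))"
      using integral_linear[OF Fi bl] by (simp add: o_def)
    finally show "g j \<sigma> - g j \<tau> = integral {\<tau>..\<sigma>} (\<lambda>s. v \<bullet> (F s $ j))" .
    show "(\<lambda>s. v \<bullet> (F s $ j)) integrable_on {\<tau>..\<sigma>}"
      using integrable_linear[OF Fi bl] by (simp add: o_def)
  qed
  have Fb: "v \<bullet> (F s $ i) \<le> (\<Sum>j\<in>UNIV. max (w i j s) 0)" if "0 \<le> s" for i s
  proof -
    have "v \<bullet> (F s $ i) = (\<Sum>j\<in>UNIV. M i j s * w i j s)"
    proof -
      have "v \<bullet> (F s $ i) = lam i (x s) / N * (\<Sum>j\<in>UNIV. (M i j s * phi i j (x s $ i) (x s $ j)) * (g j s - g i s))"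
        unfolding F_def consensus_field_def g_def N_def
        by (simp add: inner_sum_right inner_diff_right)
      also have "\<dots> = (\<Sum>j\<in>UNIV. M i j s * w i j s)"
        unfolding sum_distrib_left w_def by (rule sum.cong) (auto simp: field_simps)
      finally show ?thesis .
    qed
    also have "\<dots> \<le> (\<Sum>j\<in>UNIV. max (w i j s) 0)"
    proof (rule sum_mono)
      fix j
      have "0 \<le> M i j s" "M i j s \<le> 1" using M_range[OF that] by auto
      then show "M i j s * w i j s \<le> max (w i j s) 0"
        by (cases "w i j s \<ge> 0") (auto simp: mult_left_le_one_le mult_nonneg_nonpos)
    qed
    finally show ?thesis .
  qed
  have wcont: "continuous_on {0..b} (\<lambda>s. max (w i j s) 0)" for i j
  proof -
    have c1: "continuous_on {0..b} (\<lambda>s. lam i (x s))"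
      by (rule continuous_on_compose2[OF lam_cont xcont]) auto
    have cp: "continuous_on {0..b} (\<lambda>s. (x s $ i, x s $ j))"
      by (intro continuous_intros xcont)
    have c2: "continuous_on {0..b} (\<lambda>s. phi i j (x s $ i) (x s $ j))"
      using continuous_on_compose2[OF phi_cont[of i j] cp] by simp
    show ?thesis unfolding w_def
      by (intro continuous_intros c1 c2 gcont) (use N0 in auto)
  qed
  have main: "g i b \<le> Max (range (\<lambda>j. g j a)) + \<epsilon> * (b - a)" if e0: "\<epsilon> > 0" for \<epsilon> i
  proof -
    define c where "c = Max (range (\<lambda>j. g j a))"
    define C where "C = {\<sigma>\<in>{a..b}. \<forall>i. g i \<sigma> \<le> c + \<epsilon> * (\<sigma> - a)}"
    have "b \<in> C"
    proof (rule real_induct_closed[OF ab(2)])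
      have "C = (\<Inter>i. {a..b} \<inter> (\<lambda>\<sigma>. g i \<sigma> - \<epsilon> * (\<sigma> - a)) -` {..c})"
        unfolding C_def by (auto simp: algebra_simps)
      also have "closed \<dots>"
      proof (intro closed_INT ballI allI continuous_closed_preimage)
        fix i
        show "continuous_on {a..b} (\<lambda>\<sigma>. g i \<sigma> - \<epsilon> * (\<sigma> - a))"
          by (intro continuous_intros continuous_on_subset[OF gcont]) (use ab in auto)
      qed auto
      finally show "closed C" .
      show "a \<in> C" unfolding C_def c_def using ab by (auto intro: Max_ge)
    next
      fix \<tau> assume \<tau>C: "\<tau> \<in> C" and a\<tau>: "a \<le> \<tau>" and \<tau>b: "\<tau> < b"
      have \<tau>0: "0 \<le> \<tau>" using ab a\<tau> by simp
      have "Max (range (\<lambda>j. g j \<tau>)) \<in> range (\<lambda>j. g j \<tau>)" by (rule Max_in) auto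
      then obtain i0 where i0: "g i0 \<tau> = Max (range (\<lambda>j. g j \<tau>))" by (auto simp del: Max_in)
      have i0max: "g j \<tau> \<le> g i0 \<tau>" for j unfolding i0 by (auto intro: Max_ge)
      have i0C: "g i0 \<tau> \<le> c + \<epsilon> * (\<tau> - a)" using \<tau>C by (auto simp: C_def)
      have ev: "eventually (\<lambda>\<sigma>. \<sigma> \<le> b \<longrightarrow> g i \<sigma> \<le> c + \<epsilon> * (\<sigma> - a)) (at_right \<tau>)" for i
      proof (cases "g i \<tau> < g i0 \<tau>")
        case True
        have "((g i) \<longlongrightarrow> g i \<tau>) (at \<tau> within {0..b})"
          using gcont[of i] \<tau>0 \<tau>b unfolding continuous_on_def by auto
        from order_tendstoD(2)[OF this True]
        have "eventually (\<lambda>\<sigma>. \<sigma> \<le> b \<longrightarrow> g i \<sigma> < g i0 \<tau>) (at_right \<tau>)"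
          by (rule to_right[OF _ \<tau>0])
        moreover have "eventually (\<lambda>\<sigma>. \<sigma> > \<tau>) (at_right \<tau>)"
          by (simp add: eventually_at_right_less)
        ultimately show ?thesis
        proof eventually_elim
          case (elim \<sigma>)
          have "\<epsilon> * (\<tau> - a) \<le> \<epsilon> * (\<sigma> - a)" using elim e0 by simp
          then show ?case using elim i0C by linarith
        qed
      next
        case False
        then have imax: "g j \<tau> \<le> g i \<tau>" for j using i0max[of i] i0max[of j] by linarith
        have w\<tau>: "max (w i j \<tau>) 0 = 0" for j
        proof -
          have "lam i (x \<tau>) / N * phi i j (x \<tau> $ i) (x \<tau> $ j) > 0"
            using lam_pos phi_pos N0 by simp
          then have "w i j \<tau> \<le> 0" unfolding w_def using imax[of j]
            by (intro mult_nonneg_nonpos) auto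
          then show ?thesis by simp
        qed
        have "eventually (\<lambda>s. max (w i j s) 0 < \<epsilon> / N) (at \<tau> within {0..b})" for j
        proof -
          have "((\<lambda>s. max (w i j s) 0) \<longlongrightarrow> 0) (at \<tau> within {0..b})"
          proof -
            have "\<tau> \<in> {0..b}" using \<tau>0 \<tau>b by simp
            then have "((\<lambda>s. max (w i j s) 0) \<longlongrightarrow> max (w i j \<tau>) 0) (at \<tau> within {0..b})"
              using wcont[of i j] unfolding continuous_on_def by blast
            then show ?thesis by (simp only: w\<tau>)
          qed
          then show ?thesis by (rule order_tendstoD(2)) (use e0 N0 in simp)
        qed
        then have "eventually (\<lambda>s. \<forall>j. max (w i j s) 0 < \<epsilon> / N) (at \<tau> within {0..b})"
          by (rule eventually_all_finite)
        from to_right[OF this \<tau>0] obtain e where e: "e > \<tau>"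
          "\<And>y. y > \<tau> \<Longrightarrow> y < e \<Longrightarrow> y \<le> b \<longrightarrow> (\<forall>j. max (w i j y) 0 < \<epsilon> / N)"
          unfolding eventually_at_right_field by blast
        show ?thesis unfolding eventually_at_right_field
        proof (intro exI[of _ e] conjI allI impI)
          show "e > \<tau>" by fact
          fix \<sigma> assume \<sigma>: "\<tau> < \<sigma>" "\<sigma> < e" "\<sigma> \<le> b"
          have bnd: "v \<bullet> (F s $ i) \<le> \<epsilon>" if s: "s \<in> {\<tau>..\<sigma>}" for s
          proof -
            have "v \<bullet> (F s $ i) \<le> (\<Sum>j\<in>UNIV. max (w i j s) 0)" using Fb[of s i] s \<tau>0 by simp
            also have "\<dots> \<le> of_nat (card (UNIV::'n set)) * (\<epsilon> / N)"
            proof (rule sum_bounded_above)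
              fix j
              show "max (w i j s) 0 \<le> \<epsilon> / N"
              proof (cases "s = \<tau>")
                case True then show ?thesis using w\<tau>[of j] e0 N0 by simp
              next
                case False
                then have "\<tau> < s" "s < e" "s \<le> b" using s \<sigma> by auto
                then have "max (w i j s) 0 < \<epsilon> / N" using e(2)[of s] by blast
                then show ?thesis by simp
              qed
            qed
            also have "\<dots> = \<epsilon>" using N0 unfolding N_def by simp
            finally show ?thesis .
          qed
          have "g i \<sigma> - g i \<tau> = integral {\<tau>..\<sigma>} (\<lambda>s. v \<bullet> (F s $ i))"
            using diff[OF \<tau>0, of \<sigma> i] \<sigma> by simp
          also have "\<dots> \<le> integral {\<tau>..\<sigma>} (\<lambda>s. \<epsilon>)"
            by (rule integral_le[OF dint]) (use \<tau>0 \<sigma> bnd in auto)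
          also have "\<dots> = \<epsilon> * (\<sigma> - \<tau>)" using \<sigma> by simp
          finally have "g i \<sigma> \<le> g i \<tau> + \<epsilon> * (\<sigma> - \<tau>)" by simp
          moreover have "g i \<tau> \<le> c + \<epsilon> * (\<tau> - a)" using \<tau>C by (auto simp: C_def)
          ultimately show "g i \<sigma> \<le> c + \<epsilon> * (\<sigma> - a)" by (simp add: algebra_simps)
        qed
      qed
      then have "eventually (\<lambda>\<sigma>. \<forall>i. \<sigma> \<le> b \<longrightarrow> g i \<sigma> \<le> c + \<epsilon> * (\<sigma> - a)) (at_right \<tau>)"
        by (rule eventually_all_finite)
      moreover have "eventually (\<lambda>\<sigma>. \<sigma> > \<tau>) (at_right \<tau>)"
        by (simp add: eventually_at_right_less)
      ultimately show "eventually (\<lambda>\<sigma>. \<sigma> \<le> b \<longrightarrow> \<sigma> \<in> C) (at_right \<tau>)"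
        by eventually_elim (use a\<tau> in \<open>auto simp: C_def\<close>)
    qed
    then show ?thesis unfolding C_def c_def by auto
  qed
  have "g i b \<le> Max (range (\<lambda>j. g j a))"
  proof (rule ccontr)
    assume "\<not> ?thesis"
    then have pos: "g i b - Max (range (\<lambda>j. g j a)) > 0" by linarith
    define \<epsilon> where "\<epsilon> = (g i b - Max (range (\<lambda>j. g j a))) / (2 * (b - a + 1))"
    have "\<epsilon> > 0" unfolding \<epsilon>_def using pos ab by simp
    from main[OF this, of i] have "g i b - Max (range (\<lambda>j. g j a)) \<le> \<epsilon> * (b - a)" by simp
    also have "\<epsilon> * (b - a) < g i b - Max (range (\<lambda>j. g j a))"
      unfolding \<epsilon>_def using eps_aux[OF pos, of "b - a"] ab by simp
    finally show False by simp
  qed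
  then show ?thesis unfolding g_def .
qed
theorem proposition1:
  fixes x :: "real \<Rightarrow> real^'d::finite^'n::finite"
    and lam :: "'n \<Rightarrow> real^'d^'n \<Rightarrow> real"
    and M :: "'n \<Rightarrow> 'n \<Rightarrow> real \<Rightarrow> real"
    and phi :: "'n \<Rightarrow> 'n \<Rightarrow> real^'d \<Rightarrow> real^'d \<Rightarrow> real"
  assumes N2: "CARD('n) \<ge> 2"
    and M_meas: "\<And>i j. M i j \<in> borel_measurable (restrict_space lebesgue {0..})"
    and M_range: "\<And>i j t. t \<ge> 0 \<Longrightarrow> M i j t \<in> {0..1}"
    and lam_lip: "\<And>i. \<exists>C. C-lipschitz_on UNIV (lam i)"
    and lam_pos: "\<And>i y. lam i y > 0"
    and phi_lip: "\<And>i j. \<exists>C. C-lipschitz_on UNIV (\<lambda>(a, b). phi i j a b)"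
    and phi_pos: "\<And>i j a b. phi i j a b > 0"
    and sol: "caratheodory_solution (consensus_field lam M phi) x"
  shows "(\<forall>t s. 0 \<le> t \<and> t \<le> s \<longrightarrow> supp (x s) \<subseteq> supp (x t))
       \<and> (CARD('d) = 1 \<longrightarrow>
           (\<forall>t s k. 0 \<le> t \<and> t \<le> s \<longrightarrow>
              (MAX j. x s $ j $ k) \<le> (MAX j. x t $ j $ k) \<and>
              (MIN j. x t $ j $ k) \<le> (MIN j. x s $ j $ k)))
       \<and> (\<forall>t s. 0 \<le> t \<and> t \<le> s \<longrightarrow>
              (MAX (i, j). norm (x s $ i - x s $ j)) \<le> (MAX (i, j). norm (x t $ i - x t $ j)))"
proof -
  have lam_cont: "continuous_on UNIV (lam i)" for i
    using lam_lip[of i] lipschitz_on_continuous_on by blast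
  have phi_cont: "continuous_on UNIV (\<lambda>(a, b). phi i j a b)" for i j
    using phi_lip[of i j] lipschitz_on_continuous_on by blast
  have cores: "\<exists>j. v \<bullet> (x b $ i) \<le> v \<bullet> (x a $ j)" if "0 \<le> a" "a \<le> b" for v a b i
  proof -
    have "v \<bullet> (x b $ i) \<le> Max (range (\<lambda>j. v \<bullet> (x a $ j)))"
      by (rule core[OF M_range lam_cont lam_pos phi_cont phi_pos sol that])
    moreover have "Max (range (\<lambda>j. v \<bullet> (x a $ j))) \<in> range (\<lambda>j. v \<bullet> (x a $ j))"
      by (rule Max_in) auto
    ultimately show ?thesis by (auto simp del: Max_in)
  qed
  have P1: "supp (x s) \<subseteq> supp (x t)" if ts: "0 \<le> t" "t \<le> s" for t s
  proof -
    define K where "K = convex hull (range (\<lambda>i. x t $ i))"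
    have cK: "compact K" unfolding K_def
      by (intro compact_convex_hull finite_imp_compact) auto
    then have clK: "closed K" by (rule compact_imp_closed)
    have sK: "supp (x t) = K" unfolding supp_def K_def[symmetric] using clK by simp
    have "range (\<lambda>i. x s $ i) \<subseteq> K"
    proof
      fix z assume "z \<in> range (\<lambda>i. x s $ i)"
      then obtain i where zi: "z = x s $ i" by auto
      show "z \<in> K"
      proof (rule ccontr)
        assume "z \<notin> K"
        from separating_hyperplane_closed_point[OF _ clK this] obtain u c
          where uc: "u \<bullet> z < c" "\<And>y. y \<in> K \<Longrightarrow> u \<bullet> y > c"
          unfolding K_def using convex_convex_hull by blast
        obtain j where "(-u) \<bullet> (x s $ i) \<le> (-u) \<bullet> (x t $ j)" using cores[OF ts] by blast
        moreover have "x t $ j \<in> K" unfolding K_def by (rule hull_inc) auto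
        ultimately show False using uc zi by force
      qed
    qed
    then have "convex hull (range (\<lambda>i. x s $ i)) \<subseteq> K"
      unfolding K_def by (rule hull_minimal) (rule convex_convex_hull)
    then have "supp (x s) \<subseteq> K" unfolding supp_def using clK by (rule closure_minimal)
    then show ?thesis using sK by simp
  qed
  have P2: "(MAX j. x s $ j $ k) \<le> (MAX j. x t $ j $ k) \<and> (MIN j. x t $ j $ k) \<le> (MIN j. x s $ j $ k)"
    if ts: "0 \<le> t" "t \<le> s" for t s k
  proof
    show "(MAX j. x s $ j $ k) \<le> (MAX j. x t $ j $ k)"
    proof (subst Max_le_iff, simp, simp, safe)
      fix j
      obtain j' where "axis k 1 \<bullet> (x s $ j) \<le> axis k 1 \<bullet> (x t $ j')" using cores[OF ts] by blast
      then have "x s $ j $ k \<le> x t $ j' $ k" by (simp add: inner_axis')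
      also have "\<dots> \<le> (MAX j. x t $ j $ k)" by (rule Max_ge) auto
      finally show "x s $ j $ k \<le> (MAX j. x t $ j $ k)" .
    qed
    show "(MIN j. x t $ j $ k) \<le> (MIN j. x s $ j $ k)"
    proof (subst Min_ge_iff, simp, simp, safe)
      fix j
      obtain j' where "axis k (-1) \<bullet> (x s $ j) \<le> axis k (-1) \<bullet> (x t $ j')" using cores[OF ts] by blast
      then have "x t $ j' $ k \<le> x s $ j $ k" by (simp add: inner_axis')
      have "(MIN j. x t $ j $ k) \<le> x t $ j' $ k" by (rule Min_le) auto
      also have "\<dots> \<le> x s $ j $ k" by fact
      finally show "(MIN j. x t $ j $ k) \<le> x s $ j $ k" .
    qed
  qed
  have P3: "(MAX (i, j). norm (x s $ i - x s $ j)) \<le> (MAX (i, j). norm (x t $ i - x t $ j))"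
    if ts: "0 \<le> t" "t \<le> s" for t s
  proof (subst Max_le_iff, simp, simp, safe)
    fix i j
    define u where "u = x s $ i - x s $ j"
    obtain p where p: "u \<bullet> (x s $ i) \<le> u \<bullet> (x t $ p)" using cores[OF ts] by blast
    obtain q where q: "(-u) \<bullet> (x s $ j) \<le> (-u) \<bullet> (x t $ q)" using cores[OF ts] by blast
    define D where "D = norm (x t $ p - x t $ q)"
    have "norm u ^ 2 = u \<bullet> u" by (simp add: power2_norm_eq_inner)
    also have "\<dots> = u \<bullet> (x s $ i) - u \<bullet> (x s $ j)" unfolding u_def by (simp add: inner_diff_right)
    also have "\<dots> \<le> u \<bullet> (x t $ p - x t $ q)" using p q by (simp add: inner_diff_right)
    also have "\<dots> \<le> norm u * D" unfolding D_def by (rule norm_cauchy_schwarz)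
    finally have "norm u ^ 2 \<le> norm u * D" .
    then have "norm u \<le> D"
      by (cases "norm u = 0") (auto simp: power2_eq_square D_def)
    also have "D \<le> (MAX (i, j). norm (x t $ i - x t $ j))"
      unfolding D_def by (rule Max_ge) auto
    finally show "norm (x s $ i - x s $ j) \<le> (MAX (i, j). norm (x t $ i - x t $ j))"
      unfolding u_def .
  qed
  show ?thesis using P1 P2 P3 by blast
qed
end
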